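(* For every $\varepsilon>0$ there is a constant $C>0$ such that the following holds. For every finite set $X$ with $|X|=n\ge 2$ and every nontrivial monotone increasing family $\mathcal F\subseteq 2^X$, writing $m(p)=\mu_p(\mathcal F)$ and $p_c=p_c(\mathcal F)$, there exists $p\in[n^{-\varepsilon}p_c,\;p_c]$ such that $$p\,m'(p)\;\le\;C\,m(p)\,\log_2\!\big(1/m(p)\big)$$ (equivalently, $p\,m'(p)\le C\log_2(1/p)\cdot m(p)\log_p m(p)$, i.e. $\mathcal F$ is $(C\log_2(1/p),p)$-optimal).
   Context: For a finite set $X$ with $|X|=n$ and $p\in[0,1]$, $\mu_p$ is the product measure on $2^X$ given by $\mu_p(S)=p^{|S|}(1-p)^{n-|S|}$, and $\mu_p(\mathcal F)=\sum_{S\in\mathcal F}\mu_p(S)$. A family $\mathcal F\subseteq 2^X$ is monotone increasing if $B\supseteq A\in\mathcal F$ implies $B\in\mathcal F$; it is nontrivial if $\mathcal F\neq\emptyset$ and $\mathcal F\neq 2^X$. For such $\mathcal F$, $m(p)=\mu_p(\mathcal F)$ is a strictly increasing polynomial in $p$ with $m(0)=0$, $m(1)=1$, and $p_c(\mathcal F)$ denotes the unique $p\in[0,1]$ with $\mu_p(\mathcal F)=1/2$. Given $C>0$, $\mathcal F$ is called $(C,p)$-optimal if $p\,m'(p)\le C\,m(p)\log_p m(p)$, where $\log_p x=\ln x/\ln p$. *)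

theory Defs
  imports "HOL-Analysis.Analysis"
begin

definition mu_p :: "real \<Rightarrow> 'a set \<Rightarrow> 'a set set \<Rightarrow> real" where
  "mu_p p X F = (\<Sum>S\<in>F. p ^ card S * (1 - p) ^ (card X - card S))"

definition monotone_increasing :: "'a set \<Rightarrow> 'a set set \<Rightarrow> bool" where
  "monotone_increasing X F \<longleftrightarrow> F \<subseteq> Pow X \<and> (\<forall>A B. A \<in> F \<and> A \<subseteq> B \<and> B \<subseteq> X \<longrightarrow> B \<in> F)"

definition nontrivial_family :: "'a set \<Rightarrow> 'a set set \<Rightarrow> bool" where
  "nontrivial_family X F \<longleftrightarrow> F \<noteq> {} \<and> F \<noteq> Pow X"

definition p_crit :: "'a set \<Rightarrow> 'a set set \<Rightarrow> real" where
  "p_crit X F = (THE p. 0 \<le> p \<and> p \<le> 1 \<and> mu_p p X F = 1/2)"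

end

theory Submission
  imports Defs
begin

lemma mu_decomp:
  fixes p :: real
  assumes fin: "finite X'" and x: "x \<notin> X'" and FX: "F \<subseteq> Pow (insert x X')"
  shows "mu_p p (insert x X') F =
     (1 - p) * mu_p p X' {S\<in>F. x \<notin> S} + p * mu_p p X' {T\<in>Pow X'. insert x T \<in> F}"
proof -
  let ?X = "insert x X'"
  let ?t = "\<lambda>N S. p ^ card S * (1 - p) ^ (N - card S)"
  have finF: "finite F" using FX fin by (meson finite_Pow_iff finite_insert rev_finite_subset)
  have cX: "card ?X = Suc (card X')" using fin x by simp
  have split: "F = {S\<in>F. x \<notin> S} \<union> {S\<in>F. x \<in> S}" by auto
  have "mu_p p ?X F = (\<Sum>S\<in>{S\<in>F. x \<notin> S}. ?t (card ?X) S) + (\<Sum>S\<in>{S\<in>F. x \<in> S}. ?t (card ?X) S)"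
    unfolding mu_p_def by (subst split, rule sum.union_disjoint) (use finF in auto)
  moreover have "(\<Sum>S\<in>{S\<in>F. x \<notin> S}. ?t (card ?X) S) = (1 - p) * mu_p p X' {S\<in>F. x \<notin> S}"
    unfolding mu_p_def sum_distrib_left
  proof (rule sum.cong)
    fix S assume S: "S \<in> {S\<in>F. x \<notin> S}"
    then have "S \<subseteq> X'" using FX by auto
    then have "card S \<le> card X'" using fin by (simp add: card_mono)
    then have "card ?X - card S = Suc (card X' - card S)" using cX by simp
    then show "?t (card ?X) S = (1 - p) * ?t (card X') S" by simp
  qed simp
  moreover have "(\<Sum>S\<in>{S\<in>F. x \<in> S}. ?t (card ?X) S) = p * mu_p p X' {T\<in>Pow X'. insert x T \<in> F}"
  proof -
    have inj: "inj_on (insert x) {T\<in>Pow X'. insert x T \<in> F}"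
      using x by (auto simp: inj_on_def)
    have img: "{S\<in>F. x \<in> S} = insert x ` {T\<in>Pow X'. insert x T \<in> F}"
    proof
      show "{S\<in>F. x \<in> S} \<subseteq> insert x ` {T\<in>Pow X'. insert x T \<in> F}"
      proof
        fix S assume "S \<in> {S\<in>F. x \<in> S}"
        then have "S = insert x (S - {x})" "S - {x} \<in> {T\<in>Pow X'. insert x T \<in> F}" using FX by (auto simp: insert_absorb)
        then show "S \<in> insert x ` {T\<in>Pow X'. insert x T \<in> F}" by blast
      qed
    qed auto
    have "(\<Sum>S\<in>{S\<in>F. x \<in> S}. ?t (card ?X) S) = (\<Sum>T\<in>{T\<in>Pow X'. insert x T \<in> F}. ?t (card ?X) (insert x T))"
      unfolding img by (rule sum.reindex[OF inj, unfolded comp_def])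
    also have "\<dots> = p * mu_p p X' {T\<in>Pow X'. insert x T \<in> F}"
      unfolding mu_p_def sum_distrib_left
    proof (rule sum.cong)
      fix T assume T: "T \<in> {T\<in>Pow X'. insert x T \<in> F}"
      then have "T \<subseteq> X'" by auto
      then have "card (insert x T) = Suc (card T)" using fin x by (meson card_insert_disjoint finite_subset subsetD)
      then show "?t (card ?X) (insert x T) = p * ?t (card X') T" using cX by simp
    qed simp
    finally show ?thesis .
  qed
  ultimately show ?thesis by simp
qed

lemma mu_Pow: "finite X \<Longrightarrow> mu_p p X (Pow X) = (1::real)"
proof (induction X rule: finite_induct)
  case empty then show ?case by (simp add: mu_p_def)
next
  case (insert x X)
  have a: "{S\<in>Pow (insert x X). x \<notin> S} = Pow X" using insert(2) by auto
  have b: "{T\<in>Pow X. insert x T \<in> Pow (insert x X)} = Pow X" by auto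
  show ?case using mu_decomp[OF insert(1,2) subset_refl] insert(3) unfolding a b by simp
qed

lemma mu_nonneg: "0 \<le> p \<Longrightarrow> p \<le> 1 \<Longrightarrow> 0 \<le> mu_p (p::real) X F"
  unfolding mu_p_def by (intro sum_nonneg) auto

lemma mu_mono_fam:
  assumes "finite X" "F \<subseteq> G" "G \<subseteq> Pow X" "0 \<le> p" "p \<le> (1::real)"
  shows "mu_p p X F \<le> mu_p p X G"
  unfolding mu_p_def
  by (rule sum_mono2) (use assms in \<open>auto intro: finite_subset\<close>)

lemma mu_le1:
  assumes "finite X" "F \<subseteq> Pow X" "0 \<le> p" "p \<le> (1::real)"
  shows "mu_p p X F \<le> 1"
  using mu_mono_fam[OF assms(1,2) subset_refl assms(3,4)] mu_Pow[OF assms(1)] by simp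

lemma mono_parts:
  assumes "monotone_increasing (insert x X') F" "x \<notin> X'"
  shows "monotone_increasing X' {S\<in>F. x \<notin> S}"
    "monotone_increasing X' {T\<in>Pow X'. insert x T \<in> F}"
    "{S\<in>F. x \<notin> S} \<subseteq> {T\<in>Pow X'. insert x T \<in> F}"
proof -
  from assms(1) have FX: "F \<subseteq> Pow (insert x X')" and up: "\<And>A B. A \<in> F \<Longrightarrow> A \<subseteq> B \<Longrightarrow> B \<subseteq> insert x X' \<Longrightarrow> B \<in> F"
    unfolding monotone_increasing_def by blast+
  show "monotone_increasing X' {S\<in>F. x \<notin> S}"
    unfolding monotone_increasing_def using FX up assms(2) by blast
  show "monotone_increasing X' {T\<in>Pow X'. insert x T \<in> F}"
    unfolding monotone_increasing_def using up by (auto) (meson insert_mono subset_trans insert_subset subset_insertI)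
  show "{S\<in>F. x \<notin> S} \<subseteq> {T\<in>Pow X'. insert x T \<in> F}"
    using FX by (auto intro!: up[OF _ subset_insertI])
qed

lemma mu_mono:
  assumes "finite X" "monotone_increasing X F" "0 \<le> p" "p \<le> q" "q \<le> (1::real)"
  shows "mu_p p X F \<le> mu_p q X F"
  using assms
proof (induction X arbitrary: F rule: finite_induct)
  case empty
  then show ?case by (auto simp: mu_p_def monotone_increasing_def intro!: sum_mono)
next
  case (insert x X F)
  let ?F0 = "{S\<in>F. x \<notin> S}" and ?F1 = "{T\<in>Pow X. insert x T \<in> F}"
  note mp = mono_parts[OF insert.prems(1) insert(2)]
  have FX: "F \<subseteq> Pow (insert x X)" using insert.prems(1) unfolding monotone_increasing_def by blast
  have F1X: "?F1 \<subseteq> Pow X" by blast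
  have i0: "mu_p p X ?F0 \<le> mu_p q X ?F0" using insert mp by blast
  have i1: "mu_p p X ?F1 \<le> mu_p q X ?F1" using insert mp by blast
  have d: "mu_p p X ?F0 \<le> mu_p p X ?F1" using mu_mono_fam[OF insert(1) mp(3) F1X] insert by simp
  have e: "mu_p q (insert x X) F - mu_p p (insert x X) F =
     (1-q) * (mu_p q X ?F0 - mu_p p X ?F0) + q * (mu_p q X ?F1 - mu_p p X ?F1) + (q-p) * (mu_p p X ?F1 - mu_p p X ?F0)"
    unfolding mu_decomp[OF insert(1,2) FX] by (simp add: algebra_simps)
  have "0 \<le> (1-q) * (mu_p q X ?F0 - mu_p p X ?F0) + q * (mu_p q X ?F1 - mu_p p X ?F1) + (q-p) * (mu_p p X ?F1 - mu_p p X ?F0)"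
    using i0 i1 d insert.prems by (intro add_nonneg_nonneg mult_nonneg_nonneg) auto
  then show ?case using e by simp
qed

lemma mu_strict:
  assumes "finite X" "monotone_increasing X F" "nontrivial_family X F" "0 \<le> p" "p < q" "q \<le> (1::real)"
  shows "mu_p p X F < mu_p q X F"
  using assms
proof (induction X arbitrary: F rule: finite_induct)
  case empty
  then have "F \<subseteq> {{}}" "F \<noteq> {}" "F \<noteq> {{}}" unfolding monotone_increasing_def nontrivial_family_def by auto
  then show ?case by (metis subset_singletonD)
next
  case (insert x X F)
  let ?F0 = "{S\<in>F. x \<notin> S}" and ?F1 = "{T\<in>Pow X. insert x T \<in> F}"
  note mp = mono_parts[OF insert.prems(1) insert(2)]
  have FX: "F \<subseteq> Pow (insert x X)" and up: "\<And>A B. A \<in> F \<Longrightarrow> A \<subseteq> B \<Longrightarrow> B \<subseteq> insert x X \<Longrightarrow> B \<in> F"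
    using insert.prems(1) unfolding monotone_increasing_def by blast+
  have F1X: "?F1 \<subseteq> Pow X" by blast
  have pq: "0 \<le> p" "p \<le> q" "q \<le> 1" "p < q" using insert.prems by auto
  have i0: "mu_p p X ?F0 \<le> mu_p q X ?F0" using mu_mono[OF insert(1) mp(1) pq(1-3)] .
  have i1: "mu_p p X ?F1 \<le> mu_p q X ?F1" using mu_mono[OF insert(1) mp(2) pq(1-3)] .
  have d: "mu_p p X ?F0 \<le> mu_p p X ?F1" using mu_mono_fam[OF insert(1) mp(3) F1X] pq by simp
  have e: "mu_p q (insert x X) F - mu_p p (insert x X) F =
     (1-q) * (mu_p q X ?F0 - mu_p p X ?F0) + q * (mu_p q X ?F1 - mu_p p X ?F1) + (q-p) * (mu_p p X ?F1 - mu_p p X ?F0)"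
    unfolding mu_decomp[OF insert(1,2) FX] by (simp add: algebra_simps)
  have t1: "0 \<le> (1-q) * (mu_p q X ?F0 - mu_p p X ?F0)" using i0 pq by simp
  have t2: "0 \<le> q * (mu_p q X ?F1 - mu_p p X ?F1)" using i1 pq by simp
  have t3: "0 \<le> (q-p) * (mu_p p X ?F1 - mu_p p X ?F0)" using d pq by simp
  obtain S where S: "S \<in> F" using insert.prems(2) unfolding nontrivial_family_def by blast
  have "insert x X \<in> F" by (rule up[OF S]) (use FX S in auto)
  then have F1ne: "?F1 \<noteq> {}" by auto
  have F0nP: "?F0 \<noteq> Pow X"
  proof
    assume "?F0 = Pow X"
    then have "{} \<in> F" by auto
    then have "F = Pow (insert x X)" using FX by (intro equalityI) (auto intro: up[OF \<open>{} \<in> F\<close>])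
    then show False using insert.prems(2) unfolding nontrivial_family_def by blast
  qed
  have "0 < mu_p q (insert x X) F - mu_p p (insert x X) F"
  proof (cases "?F1 = Pow X")
    case False
    then have "mu_p p X ?F1 < mu_p q X ?F1"
      using insert.IH[OF mp(2) _ pq(1) pq(4) pq(3)] F1ne False unfolding nontrivial_family_def by simp
    then have "0 < q * (mu_p q X ?F1 - mu_p p X ?F1)" using pq by simp
    then show ?thesis using e t1 t3 by linarith
  next
    case True
    show ?thesis
    proof (cases "?F0 = {}")
      case True2: True
      have z: "mu_p r X {} = 0" for r :: real by (simp add: mu_p_def)
      show ?thesis unfolding mu_decomp[OF insert(1,2) FX] True True2 z mu_Pow[OF insert(1)] using pq by simp
    next
      case False
      then have lt: "mu_p p X ?F0 < mu_p q X ?F0"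
        using insert.IH[OF mp(1) _ pq(1) pq(4) pq(3)] F0nP False unfolding nontrivial_family_def by simp
      show ?thesis
      proof (cases "q < 1")
        case True
        then have "0 < (1-q) * (mu_p q X ?F0 - mu_p p X ?F0)" using lt by simp
        then show ?thesis using e t2 t3 by linarith
      next
        case False
        then have q1: "q = 1" using pq by simp
        have "?F0 \<subseteq> Pow X" using mp(1) unfolding monotone_increasing_def by blast
        then have "mu_p q X ?F0 \<le> 1" using mu_le1[OF insert(1)] pq by simp
        then have "mu_p p X ?F0 < mu_p p X ?F1" using lt True mu_Pow[OF insert(1)] by simp
        then have "0 < (q-p) * (mu_p p X ?F1 - mu_p p X ?F0)" using pq by simp
        then show ?thesis using e t1 t2 by linarith
      qed
    qed
  qed
  then show ?case by simp
qed

lemma basic_facts: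
  assumes "finite X" "monotone_increasing X F" "nontrivial_family X F"
  shows "X \<in> F" "{} \<notin> F" "finite F" "F \<subseteq> Pow X"
proof -
  show FX: "F \<subseteq> Pow X" using assms(2) unfolding monotone_increasing_def by blast
  have up: "\<And>A B. A \<in> F \<Longrightarrow> A \<subseteq> B \<Longrightarrow> B \<subseteq> X \<Longrightarrow> B \<in> F"
    using assms(2) unfolding monotone_increasing_def by blast
  obtain S where S: "S \<in> F" using assms(3) unfolding nontrivial_family_def by blast
  show "X \<in> F" by (rule up[OF S]) (use FX S in auto)
  show "{} \<notin> F"
  proof
    assume e: "{} \<in> F"
    have "F = Pow X" using FX by (intro equalityI) (auto intro: up[OF e])
    then show False using assms(3) unfolding nontrivial_family_def by blast
  qed
  show "finite F" using FX assms(1) by (meson finite_Pow_iff rev_finite_subset)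
qed

lemma mu_at0:
  assumes "finite X" "monotone_increasing X F" "nontrivial_family X F"
  shows "mu_p 0 X F = 0"
proof -
  note b = basic_facts[OF assms]
  have "card S \<noteq> 0" if S: "S \<in> F" for S
  proof -
    have "S \<subseteq> X" using S b(4) by blast
    then have "finite S" using assms(1) by (rule finite_subset)
    moreover have "S \<noteq> {}" using S b(2) by blast
    ultimately show ?thesis by simp
  qed
  then show ?thesis unfolding mu_p_def by (intro sum.neutral) auto
qed

lemma mu_at1:
  assumes "finite X" "monotone_increasing X F" "nontrivial_family X F"
  shows "mu_p 1 X F = 1"
proof -
  note b = basic_facts[OF assms]
  have "card S < card X" if S: "S \<in> F - {X}" for S
  proof -
    have "S \<subset> X" using S b(4) by blast
    then show ?thesis using assms(1) by (rule psubset_card_mono[rotated])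
  qed
  then have "(\<Sum>S\<in>F - {X}. (1::real) ^ card S * (1 - 1) ^ (card X - card S)) = 0"
    by (intro sum.neutral) auto
  then show ?thesis unfolding mu_p_def using sum.remove[OF b(3) b(1), of "\<lambda>S. (1::real) ^ card S * (1 - 1) ^ (card X - card S)"]
    by simp
qed

lemma mu_lower:
  assumes "finite X" "monotone_increasing X F" "nontrivial_family X F" "0 \<le> p" "p \<le> (1::real)"
  shows "p ^ card X \<le> mu_p p X F"
proof -
  note b = basic_facts[OF assms(1-3)]
  have "p ^ card X * (1 - p) ^ (card X - card X) \<le> (\<Sum>S\<in>F. p ^ card S * (1 - p) ^ (card X - card S))"
    by (rule member_le_sum[OF b(1) _ b(3)]) (use assms in auto)
  then show ?thesis unfolding mu_p_def by simp
qed

lemma mu_upper: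
  fixes p :: real
  assumes "finite X" "monotone_increasing X F" "nontrivial_family X F" "0 \<le> p" "p \<le> (1::real)"
  shows "mu_p p X F \<le> card X * p"
proof -
  note b = basic_facts[OF assms(1-3)]
  have "mu_p p X F \<le> mu_p p X (Pow X - {{}})"
    by (rule mu_mono_fam) (use b assms in auto)
  also have "\<dots> = mu_p p X (Pow X) - (1 - p) ^ card X"
    unfolding mu_p_def using assms(1) by (subst sum_diff1) auto
  also have "\<dots> = 1 - (1 - p) ^ card X" using mu_Pow[OF assms(1)] by simp
  also have "\<dots> \<le> card X * p" using Bernoulli_inequality[of "-p" "card X"] assms by simp
  finally show ?thesis .
qed

lemma mu_deriv:
  assumes "finite F"
  shows "((\<lambda>q. mu_p q X F) has_real_derivative deriv (\<lambda>q. mu_p q X F) q) (at q)"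
proof -
  have "(\<lambda>q::real. mu_p q X F) differentiable at q"
    unfolding mu_p_def using assms
    by (intro differentiable_sum ballI differentiable_mult differentiable_power differentiable_diff differentiable_const differentiable_ident) auto
  then show ?thesis using DERIV_deriv_iff_real_differentiable by blast
qed

lemma mu_cont: "continuous_on A (\<lambda>q::real. mu_p q X F)"
  unfolding mu_p_def by (intro continuous_intros)

lemma pcrit:
  assumes "finite X" "monotone_increasing X F" "nontrivial_family X F"
  shows "0 < p_crit X F" "p_crit X F < 1" "mu_p (p_crit X F) X F = 1/2"
proof -
  have c: "continuous_on {0..1} (\<lambda>q. mu_p q X F)" by (rule mu_cont)
  have "\<exists>r\<ge>0. r \<le> 1 \<and> mu_p r X F = 1/2"
    by (rule IVT'[of "\<lambda>q. mu_p q X F" 0 "1/2" 1, OF _ _ _ c]) (simp_all add: mu_at0[OF assms] mu_at1[OF assms])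
  then obtain r where r: "0 \<le> r" "r \<le> 1" "mu_p r X F = 1/2" by blast
  have uniq: "s = r" if s: "0 \<le> s" "s \<le> 1" "mu_p s X F = 1/2" for s
  proof (rule ccontr)
    assume "s \<noteq> r"
    then consider "s < r" | "r < s" by linarith
    then show False
    proof cases
      case 1 then show False using mu_strict[OF assms s(1) 1 r(2)] r(3) s(3) by simp
    next
      case 2 then show False using mu_strict[OF assms r(1) 2 s(2)] r(3) s(3) by simp
    qed
  qed
  have "p_crit X F = r" unfolding p_crit_def
  proof (rule the_equality)
    show "0 \<le> r \<and> r \<le> 1 \<and> mu_p r X F = 1/2" using r by simp
  next
    fix s assume "0 \<le> s \<and> s \<le> 1 \<and> mu_p s X F = 1/2"
    then show "s = r" using uniq by blast
  qed
  moreover have "r \<noteq> 0" using r(3) mu_at0[OF assms] by auto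
  moreover have "r \<noteq> 1" using r(3) mu_at1[OF assms] by auto
  ultimately show "0 < p_crit X F" "p_crit X F < 1" "mu_p (p_crit X F) X F = 1/2" using r by auto
qed

lemma numeric:
  fixes n e :: real
  assumes n: "n \<ge> 2" and e: "e > 0"
  shows "n * ((1 + e) * ln n + ln 2) < ln 2 * n powr (10 + 4 * e)"
proof -
  have l2: "2/3 \<le> ln (2::real)" by (rule ln2_ge_two_thirds)
  have l2': "ln (2::real) < 1" by (rule ln_2_less_1)
  have lnn: "ln 2 \<le> ln n" using n by simp
  have lnn2: "ln n \<le> n" using ln_le_minus_one[of n] n by simp
  have p1: "n powr (10 + 4 * e) = n powr 2 * n powr (8 + 4 * e)"
    by (simp add: powr_add[symmetric])
  have p2: "n powr 2 = n^2" using n by simp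
  have p3: "n powr (8 + 4 * e) = exp ((8 + 4 * e) * ln n)" using n by (simp add: powr_def)
  have "1 + (8 + 4 * e) * ln n \<le> exp ((8 + 4 * e) * ln n)" by (rule exp_ge_add_one_self)
  moreover have "(8 + 4 * e) * (2/3) \<le> (8 + 4 * e) * ln n"
    using l2 lnn e by (intro mult_left_mono) auto
  ultimately have p4: "(8 + 4 * e) * (2/3) \<le> n powr (8 + 4 * e)" using p3 by linarith
  have "(2/3) * (n^2 * ((8 + 4 * e) * (2/3))) \<le> ln 2 * (n^2 * n powr (8 + 4 * e))"
    using l2 p4 e by (intro mult_mono mult_left_mono) auto
  then have lhs: "(2/3) * (n^2 * ((8 + 4 * e) * (2/3))) \<le> ln 2 * n powr (10 + 4 * e)"
    using p1 p2 by simp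
  have "n * ((1 + e) * ln n + ln 2) \<le> n * ((1 + e) * n + 1)"
    using n e lnn2 l2' by (intro mult_left_mono add_mono) auto
  also have "\<dots> \<le> n * ((1 + e) * n + n)" using n by simp
  also have "\<dots> = n^2 * (2 + e)" by (simp add: algebra_simps power2_eq_square)
  also have "\<dots> < n^2 * ((8 + 4 * e) * (2/3) * (2/3))"
    by (rule mult_strict_left_mono) (use n e in auto)
  also have "\<dots> = (2/3) * (n^2 * ((8 + 4 * e) * (2/3)))" by simp
  finally show ?thesis using lhs by linarith
qed

theorem mainTheorem3:
  "\<forall>\<epsilon>::real. \<epsilon> > 0 \<longrightarrow> (\<exists>C::real. C > 0 \<and>
     (\<forall>(X::nat set) (F::nat set set).
        finite X \<and> card X \<ge> 2 \<and> monotone_increasing X F \<and> nontrivial_family X F \<longrightarrow>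
        (\<exists>p. real (card X) powr (-\<epsilon>) * p_crit X F \<le> p \<and> p \<le> p_crit X F \<and>
             p * deriv (\<lambda>q. mu_p q X F) p
               \<le> C * mu_p p X F * log 2 (1 / mu_p p X F))))"
proof (intro allI impI)
  fix e :: real assume e: "e > 0"
  define K where "K = 10 + 4 * e"
  define c where "c = K / e"
  define C where "C = c * ln 2"
  have Kpos: "K > 0" using e unfolding K_def by simp
  have cpos: "c > 0" using e Kpos unfolding c_def by simp
  have Cpos: "C > 0" using cpos unfolding C_def by simp
  show "\<exists>C::real. C > 0 \<and>
     (\<forall>(X::nat set) (F::nat set set).
        finite X \<and> card X \<ge> 2 \<and> monotone_increasing X F \<and> nontrivial_family X F \<longrightarrow>
        (\<exists>p. real (card X) powr (-e) * p_crit X F \<le> p \<and> p \<le> p_crit X F \<and>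
             p * deriv (\<lambda>q. mu_p q X F) p
               \<le> C * mu_p p X F * log 2 (1 / mu_p p X F)))"
  proof (rule exI[of _ C], intro conjI Cpos allI impI)
    fix X :: "nat set" and F :: "nat set set"
    assume H: "finite X \<and> card X \<ge> 2 \<and> monotone_increasing X F \<and> nontrivial_family X F"
    then have fin: "finite X" and c2: "card X \<ge> 2" and mono: "monotone_increasing X F"
      and nt: "nontrivial_family X F" by auto
    note bf = basic_facts[OF fin mono nt]
    define n where "n = real (card X)"
    define pc where "pc = p_crit X F"
    define f where "f = (\<lambda>q. mu_p q X F)"
    define a where "a = n powr (-e) * pc"
    have n2: "n \<ge> 2" using c2 unfolding n_def by simp
    have pc: "0 < pc" "pc < 1" "f pc = 1/2" using pcrit[OF fin mono nt] unfolding pc_def f_def by auto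
    have s1: "n powr (-e) < 1" using n2 e by (intro powr_less_one) auto
    have s0: "0 < n powr (-e)" using n2 by simp
    have a0: "0 < a" "a < pc" using s0 s1 pc unfolding a_def by (auto simp: mult_less_cancel_right1)
    show "\<exists>p. real (card X) powr (-e) * p_crit X F \<le> p \<and> p \<le> p_crit X F \<and>
             p * deriv (\<lambda>q. mu_p q X F) p
               \<le> C * mu_p p X F * log 2 (1 / mu_p p X F)"
    proof (rule ccontr)
      assume nex: "\<not> ?thesis"
      have bad: "C * f p * log 2 (1 / f p) < p * deriv f p" if "a \<le> p" "p \<le> pc" for p
        using nex that unfolding a_def n_def pc_def f_def by force
      have fpos: "0 < f q" if "a \<le> q" "q \<le> pc" for q
      proof -
        have "q ^ card X \<le> f q" unfolding f_def using that a0 pc by (intro mu_lower[OF fin mono nt]) auto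
        moreover have "0 < q ^ card X" using that a0 by simp
        ultimately show ?thesis by linarith
      qed
      have fhalf: "f q \<le> 1/2" if "a \<le> q" "q \<le> pc" for q
        using mu_mono[OF fin mono, of q pc] that a0 pc unfolding f_def by simp
      have Lpos: "0 < - ln (f q)" if "a \<le> q" "q \<le> pc" for q
        using fpos[OF that] fhalf[OF that] by simp
      define h where "h = (\<lambda>q. ln (- ln (f q)) + c * ln q)"
      define h' where "h' = (\<lambda>q. (1 / (- ln (f q))) * (- (deriv f q / f q)) + c / q)"
      have hd: "(h has_real_derivative h' q) (at q)" if "a \<le> q" "q \<le> pc" for q
      proof -
        have fd: "(f has_real_derivative deriv f q) (at q)" unfolding f_def by (rule mu_deriv[OF bf(3)])
        have q0: "0 < q" using that a0 by simp
        show ?thesis unfolding h_def h'_def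
          by (rule derivative_eq_intros fd refl | use fpos[OF that] Lpos[OF that] q0 in simp)+
      qed
      obtain z where z: "a < z" "z < pc" "h pc - h a = (pc - a) * h' z"
        using MVT2[of a pc h h'] hd a0 by auto
      have zz: "a \<le> z" "z \<le> pc" using z by auto
      define fz where "fz = f z"
      define L where "L = - ln fz"
      define d where "d = deriv f z"
      have fz0: "0 < fz" using fpos[OF zz] unfolding fz_def .
      have L0: "0 < L" using Lpos[OF zz] unfolding L_def fz_def .
      have z0: "0 < z" using z a0 by simp
      have ceq: "C * fz * log 2 (1 / fz) = c * fz * L"
        unfolding C_def L_def log_def using fz0 by (simp add: ln_div)
      have b1: "c * fz * L < z * d" using bad[OF zz] ceq unfolding fz_def d_def by linarith
      have "h' z = (c * fz * L - z * d) / (z * fz * L)"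
        unfolding h'_def fz_def[symmetric] L_def[symmetric] d_def[symmetric]
        using z0 fz0 L0 by (simp add: field_simps)
      also have "\<dots> < 0" using b1 z0 fz0 L0 by (intro divide_neg_pos) auto
      finally have "h' z < 0" .
      moreover have "0 < pc - a" using a0 by simp
      ultimately have "(pc - a) * h' z < 0" by (simp add: mult_pos_neg)
      then have hlt: "h pc < h a" using z(3) by linarith
      define La where "La = - ln (f a)"
      have La0: "0 < La" using Lpos[of a] a0 unfolding La_def by simp
      have "h pc = ln (ln 2) + c * ln pc" unfolding h_def pc(3) by (simp add: ln_div)
      moreover have "h a = ln La + c * (- e * ln n + ln pc)"
        unfolding h_def La_def a_def using n2 pc s0 by (simp add: ln_mult ln_powr)
      moreover have "c * (- e * ln n + ln pc) = - K * ln n + c * ln pc"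
        using e unfolding c_def by (simp add: field_simps)
      ultimately have "ln (ln 2) + K * ln n < ln La"
        using hlt by linarith
      then have "exp (ln (ln 2) + K * ln n) < La" using La0 by (metis exp_less_cancel_iff exp_ln)
      then have low: "ln 2 * n powr K < La" using n2 by (simp add: exp_add powr_def)
      have "a ^ card X \<le> f a" unfolding f_def using a0 pc by (intro mu_lower[OF fin mono nt]) auto
      then have "ln (a ^ card X) \<le> ln (f a)" using a0 by (intro ln_mono) auto
      moreover have "ln (a ^ card X) = n * ln a" unfolding n_def using a0 by (simp add: ln_realpow)
      ultimately have "La \<le> - (n * ln a)" unfolding La_def by linarith
      then have up1: "La \<le> n * (e * ln n - ln pc)"
        unfolding a_def using n2 pc s0 by (simp add: ln_mult ln_powr algebra_simps)
      have "1/2 \<le> n * pc" using mu_upper[OF fin mono nt, of pc] pc unfolding f_def n_def by simp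
      then have "1 / (2 * n) \<le> pc" using n2 by (simp add: field_simps)
      then have "ln (1 / (2 * n)) \<le> ln pc" using n2 by (intro ln_mono) auto
      then have "- ln pc \<le> ln 2 + ln n" using n2 by (simp add: ln_div ln_mult)
      then have "e * ln n - ln pc \<le> (1 + e) * ln n + ln 2" by (simp add: algebra_simps)
      then have "n * (e * ln n - ln pc) \<le> n * ((1 + e) * ln n + ln 2)" using n2 by (intro mult_left_mono) auto
      then have "La \<le> n * ((1 + e) * ln n + ln 2)" using up1 by linarith
      with low numeric[OF n2 e] show False unfolding K_def by linarith
    qed
  qed
qed

end
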